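(* Let $p$ be a prime number and let $x,y,z\in\mathbb{N}$ with $x\le y\le z$ satisfy $\frac{4}{p}=\frac{1}{x}+\frac{1}{y}+\frac{1}{z}$. Then $\gcd(x,p)=1$.
   Context: $\mathbb{N}$ denotes the positive integers. *)

theory Defs
  imports "HOL-Analysis.Analysis"
begin

end

theory Submission
  imports Defs
begin

theorem lemma2:
  fixes p x y z :: nat
  assumes "prime p"
    and "0 < x" and "0 < y" and "0 < z"
    and "x \<le> y" and "y \<le> z"
    and "(4::real) / real p = 1 / real x + 1 / real y + 1 / real z"
  shows "gcd x p = 1"
proof -
  have pp: "p > 0" using assms(1) prime_gt_0_nat by blast
  have a: "1 / real y \<le> 1 / real x" using assms by (simp add: frac_le)
  have b: "1 / real z \<le> 1 / real x" using assms by (simp add: frac_le)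
  have "(4::real) / real p \<le> 3 / real x" using assms(7) a b by simp
  hence "4 * real x \<le> 3 * real p" using pp assms(2) by (simp add: field_simps)
  hence "x < p" using pp by linarith
  hence "\<not> p dvd x" using assms(2) by (auto dest: dvd_imp_le)
  hence "coprime p x" using assms(1) by (simp add: prime_imp_coprime)
  thus ?thesis by (simp add: coprime_commute)
qed

end
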